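(* Suppose that $\theta<\kappa$ is a pair of infinite regular cardinals and $\boxminus^-(\kappa,\theta)$ holds. Then there exists an $E^\kappa_{\ge\theta}$-closed subadditive coloring $c:[\kappa]^2\to\theta$ witnessing $\mathrm U(\kappa,2,\theta,2)$. In particular, $\kappa$ is not weakly compact.
   Context: $E^\kappa_{\ge\theta}$ is the set of ordinals below $\kappa$ of cofinality $\ge\theta$; $\mathrm{acc}(A)=\{\alpha\in A\mid\sup(A\cap\alpha)=\alpha>0\}$. $\boxminus^-(\kappa,\theta)$ asserts the existence of $\langle C_{\alpha,i}\mid\alpha\in\mathrm{acc}(\kappa),\ i(\alpha)\le i<\theta\rangle$ such that: (1) for all $\alpha$, $i(\alpha)<\theta$ and $\langle C_{\alpha,i}\mid i(\alpha)\le i<\theta\rangle$ is a $\subseteq$-increasing sequence of clubs in $\alpha$ with $\mathrm{acc}(\alpha)=\bigcup_i\mathrm{acc}(C_{\alpha,i})$; (2) for all $\alpha$, $i(\alpha)\le i<\theta$ and $\bar\alpha\in\mathrm{acc}(C_{\alpha,i})\cap E^\kappa_{\ge\theta}$: $i(\bar\alpha)\le i$ and $C_{\bar\alpha,i}=C_{\alpha,i}\cap\bar\alpha$; (3) for all $\bar\alpha<\alpha$ in $\mathrm{acc}(\kappa)$ and all sufficiently large $i<\theta$, $C_{\bar\alpha,i}=C_{\alpha,i}\cap\bar\alpha$; (4) for every club $D\subseteq\kappa$ there is $\alpha\in\mathrm{acc}(D)\cap E^\kappa_{\ge\theta}$ with $D\cap\alpha\ne C_{\alpha,i}$ for all $i<\theta$.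 A coloring $c:[\kappa]^2\to\theta$ witnesses $\mathrm U(\kappa,2,\theta,2)$ if for every $H\in[\kappa]^\kappa$, $c``[H]^2$ is cofinal in $\theta$. It is subadditive if for all $\alpha<\beta<\gamma<\kappa$, $c(\alpha,\gamma)\le\max\{c(\alpha,\beta),c(\beta,\gamma)\}$ and $c(\alpha,\beta)\le\max\{c(\alpha,\gamma),c(\beta,\gamma)\}$. It is $\Sigma$-closed (for $\Sigma\subseteq\kappa$) if whenever $\alpha<\beta<\kappa$, $j<\theta$, $\alpha\in\Sigma$ and $\sup\{\varepsilon<\alpha\mid c(\varepsilon,\beta)\le j\}=\alpha$, then $c(\alpha,\beta)\le j$. *)

theory Defs
  imports Main
begin

text \<open>The cardinal kappa is represented by a type 'k of class wellorder
whose order type is kappa (every proper initial segment has cardinality smaller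
than the whole type). Ordinals below kappa are the elements of 'k; in particular
theta < kappa is an element of 'k and the ordinal theta is the set of its
predecessors.\<close>

definition is_cardinal_ord :: "'a::wellorder \<Rightarrow> bool" where
  "is_cardinal_ord \<theta> \<longleftrightarrow> (\<forall>j<\<theta>. (card_of ({..<j}), card_of ({..<\<theta>}) ) \<in> ordLess)"

definition cofinal_in :: "'a::wellorder set \<Rightarrow> 'a \<Rightarrow> bool" where
  "cofinal_in X \<alpha> \<longleftrightarrow> X \<subseteq> {..<\<alpha>} \<and> (\<forall>\<beta><\<alpha>. \<exists>x\<in>X. \<beta> \<le> x)"

definition cf_ge :: "'a::wellorder \<Rightarrow> 'a \<Rightarrow> bool" where
  "cf_ge \<alpha> \<theta> \<longleftrightarrow> (\<forall>X. cofinal_in X \<alpha> \<longrightarrow> (card_of ({..<\<theta>}), card_of (X) ) \<in> ordLeq)"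

definition infinite_regular_cardinal_ord :: "'a::wellorder \<Rightarrow> bool" where
  "infinite_regular_cardinal_ord \<theta> \<longleftrightarrow>
     infinite {..<\<theta>} \<and> is_cardinal_ord \<theta> \<and> cf_ge \<theta> \<theta>"

definition E_ge :: "'a::wellorder \<Rightarrow> 'a set" where
  "E_ge \<theta> = {\<alpha>. cf_ge \<alpha> \<theta>}"

text \<open>alpha is an accumulation point of A: sup(A \<inter> alpha) = alpha > 0\<close>
definition acc_pt :: "'a::wellorder set \<Rightarrow> 'a \<Rightarrow> bool" where
  "acc_pt A \<alpha> \<longleftrightarrow> (\<exists>\<beta>. \<beta> < \<alpha>) \<and> (\<forall>\<beta><\<alpha>. \<exists>\<gamma>\<in>A. \<beta> < \<gamma> \<and> \<gamma> < \<alpha>)"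

definition acc :: "'a::wellorder set \<Rightarrow> 'a set" where
  "acc A = {\<alpha>\<in>A. acc_pt A \<alpha>}"

definition club_in :: "'a::wellorder set \<Rightarrow> 'a \<Rightarrow> bool" where
  "club_in C \<alpha> \<longleftrightarrow> C \<subseteq> {..<\<alpha>} \<and> (\<forall>\<beta><\<alpha>. \<exists>\<gamma>\<in>C. \<beta> \<le> \<gamma>)
      \<and> (\<forall>\<beta><\<alpha>. acc_pt C \<beta> \<longrightarrow> \<beta> \<in> C)"

definition club :: "'a::wellorder set \<Rightarrow> bool" where
  "club D \<longleftrightarrow> (\<forall>\<beta>. \<exists>\<gamma>\<in>D. \<beta> \<le> \<gamma>) \<and> (\<forall>\<beta>. acc_pt D \<beta> \<longrightarrow> \<beta> \<in> D)"

definition kappa_infinite_regular_cardinal :: "'a::wellorder itself \<Rightarrow> bool" where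
  "kappa_infinite_regular_cardinal TYPE('a) \<longleftrightarrow>
     infinite (UNIV :: 'a set) \<and> (\<forall>\<alpha>::'a. (card_of ({..<\<alpha>}), card_of (UNIV :: 'a set) ) \<in> ordLess)
     \<and> (\<forall>X::'a set. (\<forall>\<beta>. \<exists>x\<in>X. \<beta> \<le> x) \<longrightarrow> (card_of (UNIV :: 'a set), card_of (X) ) \<in> ordLeq)"

text \<open>The principle boxminus^-(kappa, theta), with C alpha i = C_{alpha,i} and
ix alpha = i(alpha). Values of C and ix outside the index domain are irrelevant.\<close>
definition boxminus_minus_wit :: "'a::wellorder \<Rightarrow> ('a \<Rightarrow> 'a \<Rightarrow> 'a set) \<Rightarrow> ('a \<Rightarrow> 'a) \<Rightarrow> bool" where
  "boxminus_minus_wit \<theta> C ix \<longleftrightarrow>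
    (\<forall>\<alpha>\<in>acc UNIV.
        ix \<alpha> < \<theta>
      \<and> (\<forall>i. ix \<alpha> \<le> i \<and> i < \<theta> \<longrightarrow> club_in (C \<alpha> i) \<alpha>)
      \<and> (\<forall>i j. ix \<alpha> \<le> i \<and> i \<le> j \<and> j < \<theta> \<longrightarrow> C \<alpha> i \<subseteq> C \<alpha> j)
      \<and> acc {..<\<alpha>} = (\<Union>i\<in>{i. ix \<alpha> \<le> i \<and> i < \<theta>}. acc (C \<alpha> i)))
  \<and> (\<forall>\<alpha>\<in>acc UNIV. \<forall>i. ix \<alpha> \<le> i \<and> i < \<theta> \<longrightarrow>
        (\<forall>\<alpha>'\<in>acc (C \<alpha> i) \<inter> E_ge \<theta>. ix \<alpha>' \<le> i \<and> C \<alpha>' i = C \<alpha> i \<inter> {..<\<alpha>'}))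
  \<and> (\<forall>\<alpha>'\<in>acc UNIV. \<forall>\<alpha>\<in>acc UNIV. \<alpha>' < \<alpha> \<longrightarrow>
        (\<exists>j<\<theta>. \<forall>i. j \<le> i \<and> i < \<theta> \<and> ix \<alpha>' \<le> i \<and> ix \<alpha> \<le> i \<longrightarrow> C \<alpha>' i = C \<alpha> i \<inter> {..<\<alpha>'}))
  \<and> (\<forall>D. club D \<longrightarrow>
        (\<exists>\<alpha>\<in>acc D \<inter> E_ge \<theta>. \<forall>i. ix \<alpha> \<le> i \<and> i < \<theta> \<longrightarrow> D \<inter> {..<\<alpha>} \<noteq> C \<alpha> i))"

definition boxminus_minus :: "'a::wellorder itself \<Rightarrow> 'a \<Rightarrow> bool" where
  "boxminus_minus TYPE('a) \<theta> \<longleftrightarrow> (\<exists>C ix. boxminus_minus_wit (\<theta>::'a) C ix)"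

text \<open>c : [kappa]^2 -> theta, represented on pairs alpha < beta\<close>
definition coloring_into :: "('a::wellorder \<Rightarrow> 'a \<Rightarrow> 'a) \<Rightarrow> 'a \<Rightarrow> bool" where
  "coloring_into c \<theta> \<longleftrightarrow> (\<forall>\<alpha> \<beta>. \<alpha> < \<beta> \<longrightarrow> c \<alpha> \<beta> < \<theta>)"

definition witnesses_U :: "('a::wellorder \<Rightarrow> 'a \<Rightarrow> 'a) \<Rightarrow> 'a \<Rightarrow> bool" where
  "witnesses_U c \<theta> \<longleftrightarrow> coloring_into c \<theta> \<and>
     (\<forall>H::'a set. (card_of (H), card_of (UNIV :: 'a set) ) \<in> ordIso \<longrightarrow>
        (\<forall>j<\<theta>. \<exists>\<alpha>\<in>H. \<exists>\<beta>\<in>H. \<alpha> < \<beta> \<and> j \<le> c \<alpha> \<beta>))"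

definition subadditive :: "('a::wellorder \<Rightarrow> 'a \<Rightarrow> 'a) \<Rightarrow> bool" where
  "subadditive c \<longleftrightarrow> (\<forall>\<alpha> \<beta> \<gamma>. \<alpha> < \<beta> \<and> \<beta> < \<gamma> \<longrightarrow>
      c \<alpha> \<gamma> \<le> max (c \<alpha> \<beta>) (c \<beta> \<gamma>) \<and> c \<alpha> \<beta> \<le> max (c \<alpha> \<gamma>) (c \<beta> \<gamma>))"

text \<open>Sigma-closed. For alpha in Sigma (here always a nonzero limit), the condition
sup{eps < alpha | c eps beta <= j} = alpha is written as unboundedness in alpha.\<close>
definition Sigma_closed :: "'a::wellorder set \<Rightarrow> ('a \<Rightarrow> 'a \<Rightarrow> 'a) \<Rightarrow> 'a \<Rightarrow> bool" where
  "Sigma_closed \<Sigma> c \<theta> \<longleftrightarrow> (\<forall>\<alpha> \<beta> j. \<alpha> < \<beta> \<and> j < \<theta> \<and> \<alpha> \<in> \<Sigma> \<and>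
      (\<exists>\<delta>. \<delta> < \<alpha>) \<and> (\<forall>\<delta><\<alpha>. \<exists>\<epsilon><\<alpha>. \<delta> < \<epsilon> \<and> c \<epsilon> \<beta> \<le> j) \<longrightarrow> c \<alpha> \<beta> \<le> j)"

definition weakly_compact :: "'a::wellorder itself \<Rightarrow> bool" where
  "weakly_compact TYPE('a) \<longleftrightarrow> (natLeq, card_of (UNIV :: 'a set) ) \<in> ordLess \<and>
     (\<forall>f :: 'a \<Rightarrow> 'a \<Rightarrow> bool. \<exists>H::'a set. (card_of (H), card_of (UNIV :: 'a set) ) \<in> ordIso \<and>
        (\<exists>b. \<forall>\<alpha>\<in>H. \<forall>\<beta>\<in>H. \<alpha> < \<beta> \<longrightarrow> f \<alpha> \<beta> = b))"

end

theory Submission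
  imports Defs
begin


locale kap =
  fixes \<theta> :: "'k::wellorder"
  assumes K: "kappa_infinite_regular_cardinal TYPE('k)"
begin

abbreviation U where "U \<equiv> card_of (UNIV :: 'k set)"

lemma K_inf: "infinite (UNIV :: 'k set)"
  using K unfolding kappa_infinite_regular_cardinal_def by blast

lemma seg_small: "(card_of {..<a::'k}, U) \<in> ordLess"
  using K unfolding kappa_infinite_regular_cardinal_def by blast

lemma unbounded_big: "(\<forall>\<beta>. \<exists>x\<in>X. \<beta> \<le> x) \<Longrightarrow> (U, card_of (X::'k set)) \<in> ordLeq"
  using K unfolding kappa_infinite_regular_cardinal_def by blast

lemma small_le: "(card_of A, card_of B) \<in> ordLeq \<Longrightarrow> (card_of B, U) \<in> ordLess \<Longrightarrow> (card_of A, U) \<in> ordLess"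
  using ordLeq_ordLess_trans by blast

lemma small_bounded:
  assumes "(card_of (X::'k set), U) \<in> ordLess" shows "\<exists>b. \<forall>x\<in>X. x < b"
proof (rule ccontr)
  assume "\<not> ?thesis"
  hence "\<forall>\<beta>. \<exists>x\<in>X. \<beta> \<le> x" by (meson not_le)
  hence "(U, card_of X) \<in> ordLeq" by (rule unbounded_big)
  thus False using assms not_ordLess_ordLeq by blast
qed

lemma bounded_small: "X \<subseteq> {..<b} \<Longrightarrow> (card_of (X::'k set), U) \<in> ordLess"
  using card_of_mono1 seg_small small_le by blast

lemma no_max: "\<exists>b. (a::'k) < b"
proof (rule ccontr)
  assume "\<not> ?thesis"
  hence "\<forall>\<beta>. \<exists>x\<in>{a}. \<beta> \<le> x" by (auto simp: not_less)
  hence "(U, card_of {a}) \<in> ordLeq" by (rule unbounded_big)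
  hence "finite (UNIV::'k set)" using card_of_ordLeq_finite by blast
  thus False using K_inf by blast
qed

lemma big_unbounded:
  assumes "(card_of (H::'k set), U) \<in> ordIso" shows "\<exists>x\<in>H. a < x"
proof (rule ccontr)
  assume na: "\<not> (\<exists>x\<in>H. a < x)"
  obtain b where "a < b" using no_max by blast
  hence "H \<subseteq> {..<b}" using na by (auto simp: not_less)
  hence "(card_of H, U) \<in> ordLess" by (rule bounded_small)
  thus False using assms not_ordLess_ordIso by blast
qed

lemma unbounded_iso:
  assumes "\<forall>\<beta>. \<exists>x\<in>X. \<beta> \<le> x" shows "(card_of (X::'k set), U) \<in> ordIso"
proof -
  have "(U, card_of X) \<in> ordLeq" using assms by (rule unbounded_big)
  moreover have "(card_of X, U) \<in> ordLeq" by (simp add: card_of_mono1)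
  ultimately show ?thesis by (simp add: ordIso_iff_ordLeq)
qed

lemma pigeonhole:
  assumes unb: "\<forall>\<beta>. \<exists>x\<in>X. \<beta> \<le> x" and g: "\<forall>x\<in>X. g x \<in> A"
    and sm: "(card_of A, U) \<in> ordLess"
  shows "\<exists>a\<in>A. \<forall>\<beta>. \<exists>x\<in>X. g x = a \<and> \<beta> \<le> (x::'k)"
proof (rule ccontr)
  assume "\<not> ?thesis"
  hence "\<forall>a\<in>A. \<exists>b. \<forall>x\<in>X. g x = a \<longrightarrow> x < b" by (meson not_le)
  then obtain B where B: "\<forall>a\<in>A. \<forall>x\<in>X. g x = a \<longrightarrow> x < B a" by metis
  have "(card_of (B ` A), U) \<in> ordLess" using card_of_image sm small_le by blast
  then obtain b where b: "\<forall>y\<in>B ` A. y < b" using small_bounded by blast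
  obtain x where "x \<in> X" "b \<le> x" using unb by blast
  hence "x < B (g x)" using B g by blast
  moreover have "B (g x) < b" using b g \<open>x \<in> X\<close> by blast
  ultimately show False using \<open>b \<le> x\<close> by simp
qed

lemma finite_small: "finite A \<Longrightarrow> (card_of A, U) \<in> ordLess"
  using finite_ordLess_infinite[OF card_of_Well_order card_of_Well_order, of A "UNIV::'k set"] K_inf
  by (simp add: Field_card_of)

lemma small_Times:
  assumes a: "(card_of A, U) \<in> ordLess" and b: "(card_of B, U) \<in> ordLess"
  shows "(card_of (A \<times> B), U) \<in> ordLess"
proof (cases "finite (A \<times> B)")
  case True
  thus ?thesis by (rule finite_small)
next
  case False
  hence ne: "A \<noteq> {}" "B \<noteq> {}" by auto
  have "(card_of A, card_of B) \<in> ordLeq \<or> (card_of B, card_of A) \<in> ordLeq"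
    by (rule ordLeq_total[OF card_of_Well_order card_of_Well_order])
  thus ?thesis
  proof
    assume le: "(card_of A, card_of B) \<in> ordLeq"
    have "infinite B"
    proof
      assume "finite B"
      hence "finite A" using le card_of_ordLeq_finite by blast
      thus False using False \<open>finite B\<close> by simp
    qed
    hence "(card_of (A \<times> B), card_of B) \<in> ordIso"
      using card_of_Times_infinite[OF _ ne(1) le] by blast
    thus ?thesis using b ordIso_ordLess_trans by blast
  next
    assume le: "(card_of B, card_of A) \<in> ordLeq"
    have "infinite A"
    proof
      assume "finite A"
      hence "finite B" using le card_of_ordLeq_finite by blast
      thus False using False \<open>finite A\<close> by simp
    qed
    hence "(card_of (A \<times> B), card_of A) \<in> ordIso"
      using card_of_Times_infinite[OF _ ne(2) le] by blast
    thus ?thesis using a ordIso_ordLess_trans by blast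
  qed
qed

lemma small_UN:
  assumes I: "(card_of (I::'k set), U) \<in> ordLess" and A: "\<forall>i\<in>I. (card_of (A i), U) \<in> ordLess"
  shows "(card_of (\<Union>i\<in>I. A i), U) \<in> ordLess"
proof -
  have "\<forall>i\<in>I. \<exists>h \<gamma>. inj_on h (A i) \<and> (\<forall>x\<in>A i. h x < (\<gamma>::'k))"
  proof
    fix i assume "i \<in> I"
    hence "(card_of (A i), U) \<in> ordLeq" using A ordLess_imp_ordLeq by blast
    then obtain h :: "_ \<Rightarrow> 'k" where h: "inj_on h (A i)" using card_of_ordLeq[of "A i" "UNIV::'k set"] by blast
    have "(card_of (h ` A i), U) \<in> ordLess" using card_of_image A \<open>i\<in>I\<close> small_le by blast
    then obtain \<gamma> where "\<forall>y\<in>h ` A i. y < \<gamma>" using small_bounded by blast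
    thus "\<exists>h \<gamma>. inj_on h (A i) \<and> (\<forall>x\<in>A i. h x < (\<gamma>::'k))" using h by blast
  qed
  hence "\<exists>h. \<forall>i\<in>I. \<exists>\<gamma>. inj_on (h i) (A i) \<and> (\<forall>x\<in>A i. h i x < (\<gamma>::'k))" by (rule bchoice)
  then obtain h where "\<forall>i\<in>I. \<exists>\<gamma>. inj_on (h i) (A i) \<and> (\<forall>x\<in>A i. h i x < (\<gamma>::'k))" by blast
  hence "\<exists>\<gamma>. \<forall>i\<in>I. inj_on (h i) (A i) \<and> (\<forall>x\<in>A i. h i x < \<gamma> i)" by (rule bchoice)
  then obtain \<gamma> where h: "\<forall>i\<in>I. inj_on (h i) (A i) \<and> (\<forall>x\<in>A i. h i x < \<gamma> i)" by blast
  have "(card_of (\<gamma> ` I), U) \<in> ordLess" using card_of_image I small_le by blast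
  then obtain g where g: "\<forall>y\<in>\<gamma> ` I. y < g" using small_bounded by blast
  define \<iota> where "\<iota> x = (SOME i. i \<in> I \<and> x \<in> A i)" for x
  have \<iota>: "x \<in> (\<Union>i\<in>I. A i) \<Longrightarrow> \<iota> x \<in> I \<and> x \<in> A (\<iota> x)" for x
    unfolding \<iota>_def by (rule someI_ex) blast
  define F where "F x = (\<iota> x, h (\<iota> x) x)" for x
  have "inj_on F (\<Union>i\<in>I. A i)"
  proof (rule inj_onI)
    fix x y assume x: "x \<in> (\<Union>i\<in>I. A i)" and y: "y \<in> (\<Union>i\<in>I. A i)" and "F x = F y"
    hence e: "\<iota> x = \<iota> y" "h (\<iota> x) x = h (\<iota> x) y" unfolding F_def by auto
    have xi: "\<iota> x \<in> I" "x \<in> A (\<iota> x)" using \<iota>[OF x] by auto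
    have yi: "y \<in> A (\<iota> x)" using \<iota>[OF y] e(1) by auto
    have "inj_on (h (\<iota> x)) (A (\<iota> x))" using h xi(1) by blast
    thus "x = y" using inj_onD[of "h (\<iota> x)" "A (\<iota> x)" x y] e(2) xi(2) yi by blast
  qed
  moreover have "F ` (\<Union>i\<in>I. A i) \<subseteq> I \<times> {..<g}"
  proof
    fix z assume "z \<in> F ` (\<Union>i\<in>I. A i)"
    then obtain x where x: "x \<in> (\<Union>i\<in>I. A i)" and z: "z = F x" by blast
    have xi: "\<iota> x \<in> I" "x \<in> A (\<iota> x)" using \<iota>[OF x] by auto
    have "h (\<iota> x) x < \<gamma> (\<iota> x)" using h xi by blast
    moreover have "\<gamma> (\<iota> x) < g" using g xi(1) by blast
    ultimately show "z \<in> I \<times> {..<g}" using z xi(1) unfolding F_def by auto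
  qed
  ultimately have "(card_of (\<Union>i\<in>I. A i), card_of (I \<times> {..<g})) \<in> ordLeq"
    using card_of_ordLeq by blast
  moreover have "(card_of (I \<times> {..<g}), U) \<in> ordLess" using small_Times I seg_small by blast
  ultimately show ?thesis using small_le by blast
qed

end


lemma acc_pt_transfer:
  assumes "acc_pt D \<gamma>" "\<gamma> < b" "D \<inter> {..<b} \<subseteq> E" shows "acc_pt E \<gamma>"
  unfolding acc_pt_def
proof (intro conjI allI impI)
  show "\<exists>\<beta>. \<beta> < \<gamma>" using assms(1) unfolding acc_pt_def by blast
  fix \<beta> assume "\<beta> < \<gamma>"
  then obtain x where "x \<in> D" "\<beta> < x" "x < \<gamma>" using assms(1) unfolding acc_pt_def by blast
  moreover have "x < b" using \<open>x < \<gamma>\<close> assms(2) by simp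
  ultimately show "\<exists>x\<in>E. \<beta> < x \<and> x < \<gamma>" using assms(3) by blast
qed

lemma acc_UNIV_iff: "\<alpha> \<in> acc UNIV \<longleftrightarrow> (\<exists>\<beta>. \<beta> < \<alpha>) \<and> (\<forall>\<beta><\<alpha>. \<exists>\<gamma>. \<beta> < \<gamma> \<and> \<gamma> < \<alpha>)"
  unfolding acc_def acc_pt_def by auto

locale kapth = kap \<theta> for \<theta> :: "'k::wellorder" +
  assumes TH: "infinite_regular_cardinal_ord \<theta>"
begin

lemma TH_inf: "infinite {..<\<theta>}" using TH unfolding infinite_regular_cardinal_ord_def by blast

lemma cofinal_single:
  assumes "\<forall>x<\<alpha>. x \<le> \<beta>" "\<beta> < \<alpha>" "cf_ge \<alpha> \<theta>" shows False
proof -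
  have "cofinal_in {\<beta>} \<alpha>" using assms unfolding cofinal_in_def by auto
  hence "(card_of {..<\<theta>}, card_of {\<beta>}) \<in> ordLeq" using assms(3) unfolding cf_ge_def by blast
  hence "finite {..<\<theta>}" using card_of_ordLeq_finite by blast
  thus False using TH_inf by blast
qed

lemma theta_succ: assumes "j < \<theta>" shows "\<exists>j'. j < j' \<and> j' < \<theta>"
proof (rule ccontr)
  assume "\<not> ?thesis"
  hence "\<forall>x<\<theta>. x \<le> j" by (auto simp: not_less)
  moreover have "cf_ge \<theta> \<theta>" using TH unfolding infinite_regular_cardinal_ord_def by blast
  ultimately show False using cofinal_single[of \<theta> j] assms by blast
qed

lemma E_limit: assumes "\<alpha> \<in> E_ge \<theta>" "\<delta> < \<alpha>" shows "\<alpha> \<in> acc UNIV"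
  unfolding acc_UNIV_iff
proof (intro conjI allI impI)
  show "\<exists>\<beta>. \<beta> < \<alpha>" using assms by blast
  fix \<beta> assume b: "\<beta> < \<alpha>"
  show "\<exists>\<gamma>. \<beta> < \<gamma> \<and> \<gamma> < \<alpha>"
  proof (rule ccontr)
    assume "\<not> ?thesis"
    hence "\<forall>x<\<alpha>. x \<le> \<beta>" by (auto simp: not_less)
    thus False using cofinal_single[of \<alpha> \<beta>] b assms(1) unfolding E_ge_def by blast
  qed
qed

end

locale box = kapth \<theta> for \<theta> :: "'k::wellorder" +
  fixes C :: "'k \<Rightarrow> 'k \<Rightarrow> 'k set" and ix :: "'k \<Rightarrow> 'k"
  assumes W: "boxminus_minus_wit \<theta> C ix"
begin

lemma W1: "\<alpha> \<in> acc UNIV \<Longrightarrow> ix \<alpha> < \<theta>"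
  using W[unfolded boxminus_minus_wit_def, THEN conjunct1] by blast
lemma W1c: "\<alpha> \<in> acc UNIV \<Longrightarrow> ix \<alpha> \<le> i \<Longrightarrow> i < \<theta> \<Longrightarrow> club_in (C \<alpha> i) \<alpha>"
  using W[unfolded boxminus_minus_wit_def, THEN conjunct1] by blast
lemma W1m: "\<alpha> \<in> acc UNIV \<Longrightarrow> ix \<alpha> \<le> i \<Longrightarrow> i \<le> j \<Longrightarrow> j < \<theta> \<Longrightarrow> C \<alpha> i \<subseteq> C \<alpha> j"
  using W[unfolded boxminus_minus_wit_def, THEN conjunct1] by blast
lemma W2: "\<alpha> \<in> acc UNIV \<Longrightarrow> ix \<alpha> \<le> i \<Longrightarrow> i < \<theta> \<Longrightarrow> \<alpha>' \<in> acc (C \<alpha> i) \<Longrightarrow> \<alpha>' \<in> E_ge \<theta>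
   \<Longrightarrow> ix \<alpha>' \<le> i \<and> C \<alpha>' i = C \<alpha> i \<inter> {..<\<alpha>'}"
  using W[unfolded boxminus_minus_wit_def, THEN conjunct2, THEN conjunct1] by blast
lemma W3: "\<alpha>' \<in> acc UNIV \<Longrightarrow> \<alpha> \<in> acc UNIV \<Longrightarrow> \<alpha>' < \<alpha> \<Longrightarrow>
   \<exists>j<\<theta>. \<forall>i. j \<le> i \<and> i < \<theta> \<and> ix \<alpha>' \<le> i \<and> ix \<alpha> \<le> i \<longrightarrow> C \<alpha>' i = C \<alpha> i \<inter> {..<\<alpha>'}"
  using W[unfolded boxminus_minus_wit_def, THEN conjunct2, THEN conjunct2, THEN conjunct1] by blast
lemma W4: "club D \<Longrightarrow> \<exists>\<alpha>\<in>acc D \<inter> E_ge \<theta>. \<forall>i. ix \<alpha> \<le> i \<and> i < \<theta> \<longrightarrow> D \<inter> {..<\<alpha>} \<noteq> C \<alpha> i"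
  using W[unfolded boxminus_minus_wit_def, THEN conjunct2, THEN conjunct2, THEN conjunct2] by blast

lemma club_sub: "\<alpha> \<in> acc UNIV \<Longrightarrow> ix \<alpha> \<le> i \<Longrightarrow> i < \<theta> \<Longrightarrow> C \<alpha> i \<subseteq> {..<\<alpha>}"
  using W1c unfolding club_in_def by blast

lemma lim_above: "\<exists>\<alpha>. \<alpha> \<in> acc UNIV \<and> (\<delta>::'k) \<le> \<alpha>"
proof -
  have "club {\<gamma>. \<delta> \<le> \<gamma>}" unfolding club_def
  proof (intro conjI allI impI)
    fix \<beta> :: 'k show "\<exists>\<gamma>\<in>{\<gamma>. \<delta> \<le> \<gamma>}. \<beta> \<le> \<gamma>"
      by (rule bexI[of _ "max \<beta> \<delta>"]) auto
  next
    fix \<beta> :: 'k assume "acc_pt {\<gamma>. \<delta> \<le> \<gamma>} \<beta>"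
    then obtain \<beta>' where "\<beta>' < \<beta>" "\<forall>\<beta>''<\<beta>. \<exists>\<gamma>\<in>{\<gamma>. \<delta> \<le> \<gamma>}. \<beta>'' < \<gamma> \<and> \<gamma> < \<beta>"
      unfolding acc_pt_def by blast
    then obtain \<gamma> where "\<delta> \<le> \<gamma>" "\<gamma> < \<beta>" by blast
    thus "\<beta> \<in> {\<gamma>. \<delta> \<le> \<gamma>}" by simp
  qed
  from W4[OF this] obtain \<alpha> where "\<alpha> \<in> acc {\<gamma>. \<delta> \<le> \<gamma>}" by blast
  hence "\<alpha> \<in> acc UNIV" "\<delta> \<le> \<alpha>" unfolding acc_def acc_pt_def by blast+
  thus ?thesis by blast
qed

definition L :: "'k \<Rightarrow> 'k" where "L \<alpha> = (LEAST a. a \<in> acc UNIV \<and> \<alpha> \<le> a)"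

lemma L_prop: "L \<alpha> \<in> acc UNIV \<and> \<alpha> \<le> L \<alpha>"
  unfolding L_def using lim_above[of \<alpha>] by (metis (mono_tags, lifting) LeastI)

lemma L_acc: "L \<alpha> \<in> acc UNIV" and L_ge: "\<alpha> \<le> L \<alpha>" using L_prop by auto

lemma L_least: "a \<in> acc UNIV \<Longrightarrow> \<alpha> \<le> a \<Longrightarrow> L \<alpha> \<le> a"
  unfolding L_def by (simp add: Least_le)

lemma L_mono: "\<alpha> \<le> \<beta> \<Longrightarrow> L \<alpha> \<le> L \<beta>"
  using L_least L_acc L_ge order.trans by blast

lemma L_id: "\<alpha> \<in> acc UNIV \<Longrightarrow> L \<alpha> = \<alpha>"
  using L_least L_ge by (simp add: order_antisym)

definition P :: "'k \<Rightarrow> 'k \<Rightarrow> 'k \<Rightarrow> bool" where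
  "P a b i \<longleftrightarrow> i < \<theta> \<and> ix a \<le> i \<and> ix b \<le> i \<and> (\<forall>k. i \<le> k \<and> k < \<theta> \<longrightarrow> C a k = C b k \<inter> {..<a})"

lemma P_ex: assumes "a \<in> acc UNIV" "b \<in> acc UNIV" "a \<le> b" shows "\<exists>i. P a b i"
proof (cases "a = b")
  case True
  have "P a b (ix a)" unfolding P_def using W1[OF assms(1)] club_sub[OF assms(1)] True by auto
  thus ?thesis by blast
next
  case False
  hence "a < b" using assms by simp
  from W3[OF assms(1,2) this] obtain j where j: "j < \<theta>"
    "\<forall>i. j \<le> i \<and> i < \<theta> \<and> ix a \<le> i \<and> ix b \<le> i \<longrightarrow> C a i = C b i \<inter> {..<a}" by blast
  have "P a b (max j (max (ix a) (ix b)))" unfolding P_def using j W1[OF assms(1)] W1[OF assms(2)]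
    by (auto simp: le_max_iff_disj max_less_iff_conj)
  thus ?thesis by blast
qed

definition cc :: "'k \<Rightarrow> 'k \<Rightarrow> 'k" where "cc a b = (LEAST i. P a b i)"

lemma cc_P: "a \<in> acc UNIV \<Longrightarrow> b \<in> acc UNIV \<Longrightarrow> a \<le> b \<Longrightarrow> P a b (cc a b)"
  unfolding cc_def using P_ex by (metis LeastI)

lemma cc_le: "P a b i \<Longrightarrow> cc a b \<le> i"
  unfolding cc_def by (rule Least_le)

definition col :: "'k \<Rightarrow> 'k \<Rightarrow> 'k" where "col \<alpha> \<beta> = cc (L \<alpha>) (L \<beta>)"

lemma col_P: "\<alpha> \<le> \<beta> \<Longrightarrow> P (L \<alpha>) (L \<beta>) (col \<alpha> \<beta>)"
  unfolding col_def using cc_P L_acc L_mono by blast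

lemma col_into: "coloring_into col \<theta>"
  unfolding coloring_into_def using col_P P_def less_imp_le by blast

lemma sub1:
  assumes ab: "a \<le> b" and "b \<le> c" and p: "P a b i" and q: "P b c i'" shows "P a c (max i i')"
  unfolding P_def
proof (intro conjI allI impI)
  show "max i i' < \<theta>" using p q unfolding P_def by simp
  show "ix a \<le> max i i'" using p unfolding P_def by (simp add: le_max_iff_disj)
  show "ix c \<le> max i i'" using q unfolding P_def by (simp add: le_max_iff_disj)
  fix k assume k: "max i i' \<le> k \<and> k < \<theta>"
  have e1: "C a k = C b k \<inter> {..<a}" using p k unfolding P_def by simp
  have e2: "C b k = C c k \<inter> {..<b}" using q k unfolding P_def by simp
  have ii: "{..<b} \<inter> {..<a} = {..<a}" using ab by auto
  show "C a k = C c k \<inter> {..<a}" by (simp only: e1 e2 Int_assoc ii)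
qed

lemma sub2:
  assumes ab: "a \<le> b" and "b \<le> c" and p: "P a c i" and q: "P b c i'" shows "P a b (max i i')"
  unfolding P_def
proof (intro conjI allI impI)
  show "max i i' < \<theta>" using p q unfolding P_def by simp
  show "ix a \<le> max i i'" using p unfolding P_def by (simp add: le_max_iff_disj)
  show "ix b \<le> max i i'" using q unfolding P_def by (simp add: le_max_iff_disj)
  fix k assume k: "max i i' \<le> k \<and> k < \<theta>"
  have e1: "C a k = C c k \<inter> {..<a}" using p k unfolding P_def by simp
  have e2: "C b k = C c k \<inter> {..<b}" using q k unfolding P_def by simp
  have ii: "{..<b} \<inter> {..<a} = {..<a}" using ab by auto
  show "C a k = C b k \<inter> {..<a}" by (simp only: e1 e2 Int_assoc ii)
qed

lemma col_subadd: "subadditive col"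
  unfolding subadditive_def
proof (intro allI impI conjI)
  fix \<alpha> \<beta> \<gamma> :: 'k assume a: "\<alpha> < \<beta> \<and> \<beta> < \<gamma>"
  have m: "L \<alpha> \<le> L \<beta>" "L \<beta> \<le> L \<gamma>" using a L_mono less_imp_le by blast+
  have p: "P (L \<alpha>) (L \<beta>) (col \<alpha> \<beta>)" "P (L \<beta>) (L \<gamma>) (col \<beta> \<gamma>)" "P (L \<alpha>) (L \<gamma>) (col \<alpha> \<gamma>)"
    using col_P a less_imp_le order.strict_trans by blast+
  show "col \<alpha> \<gamma> \<le> max (col \<alpha> \<beta>) (col \<beta> \<gamma>)"
    unfolding col_def[of \<alpha> \<gamma>] using sub1[OF m p(1,2)] cc_le by (simp add: col_def)
  show "col \<alpha> \<beta> \<le> max (col \<alpha> \<gamma>) (col \<beta> \<gamma>)"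
    unfolding col_def[of \<alpha> \<beta>] using sub2[OF m p(3,2)] cc_le by (simp add: col_def)
qed

end


context box begin

lemma col_closed: "Sigma_closed (E_ge \<theta>) col \<theta>"
  unfolding Sigma_closed_def
proof (intro allI impI, elim conjE)
  fix \<alpha> \<beta> j assume ab: "\<alpha> < \<beta>" and j: "j < \<theta>" and aE: "\<alpha> \<in> E_ge \<theta>"
    and ex: "\<exists>\<delta>. \<delta> < \<alpha>" and H: "\<forall>\<delta><\<alpha>. \<exists>\<epsilon><\<alpha>. \<delta> < \<epsilon> \<and> col \<epsilon> \<beta> \<le> j"
  obtain \<delta>0 where d0: "\<delta>0 < \<alpha>" using ex by blast
  have aacc: "\<alpha> \<in> acc UNIV" using E_limit[OF aE d0] .
  have La: "L \<alpha> = \<alpha>" using L_id[OF aacc] .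
  define b where "b = L \<beta>"
  have bacc: "b \<in> acc UNIV" unfolding b_def by (rule L_acc)
  have ab': "\<alpha> < b" unfolding b_def using ab L_ge[of \<beta>] by simp
  have colab: "col \<alpha> \<beta> = cc \<alpha> b" unfolding col_def b_def La ..
  show "col \<alpha> \<beta> \<le> j"
  proof (cases "\<exists>\<epsilon><\<alpha>. col \<epsilon> \<beta> \<le> j \<and> L \<epsilon> = \<alpha>")
    case True
    then obtain \<epsilon> where "col \<epsilon> \<beta> \<le> j" "L \<epsilon> = \<alpha>" by blast
    thus ?thesis unfolding colab unfolding col_def b_def by simp
  next
    case False
    have Llt: "\<epsilon> < \<alpha> \<Longrightarrow> col \<epsilon> \<beta> \<le> j \<Longrightarrow> L \<epsilon> < \<alpha>" for \<epsilon>
      using False L_least[OF aacc, of \<epsilon>] by (metis less_imp_le order.order_iff_strict)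
    have Pe: "\<epsilon> < \<alpha> \<Longrightarrow> col \<epsilon> \<beta> \<le> j \<Longrightarrow> P (L \<epsilon>) b j" for \<epsilon>
    proof -
      assume e: "\<epsilon> < \<alpha>" "col \<epsilon> \<beta> \<le> j"
      have "P (L \<epsilon>) b (col \<epsilon> \<beta>)" unfolding b_def using col_P e ab by (meson less_imp_le order.strict_trans)
      thus "P (L \<epsilon>) b j" using e(2) j unfolding P_def by auto
    qed
    obtain \<epsilon>0 where e0: "\<epsilon>0 < \<alpha>" "col \<epsilon>0 \<beta> \<le> j" using H d0 by blast
    have ixb: "ix b \<le> j" using Pe[OF e0] unfolding P_def by blast
    have accpt: "acc_pt (C b j) \<alpha>" unfolding acc_pt_def
    proof (intro conjI allI impI)
      show "\<exists>\<beta>. \<beta> < \<alpha>" using ex .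
      fix \<delta> assume "\<delta> < \<alpha>"
      then obtain \<epsilon>1 where e1: "\<epsilon>1 < \<alpha>" "\<delta> < \<epsilon>1" "col \<epsilon>1 \<beta> \<le> j" using H by blast
      then obtain \<epsilon>2 where e2: "\<epsilon>2 < \<alpha>" "\<epsilon>1 < \<epsilon>2" "col \<epsilon>2 \<beta> \<le> j" using H by blast
      define a2 where "a2 = L \<epsilon>2"
      have a2acc: "a2 \<in> acc UNIV" unfolding a2_def by (rule L_acc)
      have a2lt: "a2 < \<alpha>" unfolding a2_def using Llt e2 by blast
      have a2ge: "\<epsilon>1 < a2" unfolding a2_def using e2 L_ge[of \<epsilon>2] by simp
      have P2: "P a2 b j" unfolding a2_def using Pe e2 by blast
      have ix2: "ix a2 \<le> j" using P2 unfolding P_def by blast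
      have eq: "C a2 j = C b j \<inter> {..<a2}" using P2 j unfolding P_def by blast
      have "club_in (C a2 j) a2" using W1c[OF a2acc ix2 j] .
      then obtain \<gamma> where g: "\<gamma> \<in> C a2 j" "\<epsilon>1 \<le> \<gamma>" using a2ge unfolding club_in_def by blast
      have "\<gamma> < a2" using g(1) club_sub[OF a2acc ix2 j] by blast
      moreover have "\<gamma> \<in> C b j" using g(1) eq by blast
      moreover have "\<delta> < \<gamma>" using g(2) e1(2) by (rule less_le_trans[rotated])
      ultimately show "\<exists>\<gamma>\<in>C b j. \<delta> < \<gamma> \<and> \<gamma> < \<alpha>" using a2lt
        by (meson order.strict_trans)
    qed
    have ainC: "\<alpha> \<in> C b j" using W1c[OF bacc ixb j] accpt ab' unfolding club_in_def by blast
    have PA: "P \<alpha> b j" unfolding P_def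
    proof (intro conjI allI impI)
      show "j < \<theta>" by (rule j)
      show "ix b \<le> j" by (rule ixb)
      have k: "ix \<alpha> \<le> k \<and> C \<alpha> k = C b k \<inter> {..<\<alpha>}" if "j \<le> k" "k < \<theta>" for k
      proof -
        have sub: "C b j \<subseteq> C b k" using W1m[OF bacc ixb that] .
        have "acc_pt (C b k) \<alpha>" using acc_pt_transfer[OF accpt ab'] sub by blast
        hence "\<alpha> \<in> acc (C b k)" using ainC sub unfolding acc_def by blast
        thus ?thesis using W2[OF bacc _ that(2) _ aE] ixb that(1) by (meson order.trans)
      qed
      show "ix \<alpha> \<le> j" using k[of j] j by simp
      fix k assume "j \<le> k \<and> k < \<theta>"
      thus "C \<alpha> k = C b k \<inter> {..<\<alpha>}" using k by blast
    qed
    show ?thesis unfolding colab using cc_le[OF PA] .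
  qed
qed

lemma col_U: "witnesses_U col \<theta>"
  unfolding witnesses_U_def
proof (intro conjI allI impI col_into)
  fix H :: "'k set" and j assume Hiso: "(card_of H, U) \<in> ordIso" and j: "j < \<theta>"
  show "\<exists>\<alpha>\<in>H. \<exists>\<beta>\<in>H. \<alpha> < \<beta> \<and> j \<le> col \<alpha> \<beta>"
  proof (rule ccontr)
    assume "\<not> ?thesis"
    hence lt: "\<alpha> \<in> H \<Longrightarrow> \<beta> \<in> H \<Longrightarrow> \<alpha> < \<beta> \<Longrightarrow> col \<alpha> \<beta> \<le> j" for \<alpha> \<beta>
      by (meson not_le less_imp_le)
    have Pj: "\<alpha> \<in> H \<Longrightarrow> \<beta> \<in> H \<Longrightarrow> \<alpha> < \<beta> \<Longrightarrow> P (L \<alpha>) (L \<beta>) j" for \<alpha> \<beta>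
    proof -
      assume a: "\<alpha> \<in> H" "\<beta> \<in> H" "\<alpha> < \<beta>"
      have "P (L \<alpha>) (L \<beta>) (col \<alpha> \<beta>)" using col_P a(3) by simp
      thus ?thesis using lt[OF a] j unfolding P_def by auto
    qed
    define H2 where "H2 = {\<beta>\<in>H. \<exists>\<alpha>\<in>H. \<alpha> < \<beta>}"
    have ix2: "\<beta> \<in> H2 \<Longrightarrow> ix (L \<beta>) \<le> j" for \<beta> using Pj unfolding H2_def P_def by blast
    have club2: "\<beta> \<in> H2 \<Longrightarrow> club_in (C (L \<beta>) j) (L \<beta>)" for \<beta> using W1c[OF L_acc ix2 j] .
    have sub2: "\<beta> \<in> H2 \<Longrightarrow> C (L \<beta>) j \<subseteq> {..<L \<beta>}" for \<beta> using club_sub[OF L_acc ix2 j] .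
    have coh: "\<alpha> \<in> H \<Longrightarrow> \<beta> \<in> H \<Longrightarrow> \<alpha> < \<beta> \<Longrightarrow> C (L \<alpha>) j = C (L \<beta>) j \<inter> {..<L \<alpha>}" for \<alpha> \<beta>
      using Pj j unfolding P_def by blast
    define D where "D = (\<Union>\<beta>\<in>H2. C (L \<beta>) j)"
    have key: "\<beta> \<in> H2 \<Longrightarrow> D \<inter> {..<L \<beta>} = C (L \<beta>) j" for \<beta>
    proof
      assume b: "\<beta> \<in> H2"
      show "C (L \<beta>) j \<subseteq> D \<inter> {..<L \<beta>}" using b sub2[OF b] unfolding D_def by blast
      show "D \<inter> {..<L \<beta>} \<subseteq> C (L \<beta>) j"
      proof
        fix x assume "x \<in> D \<inter> {..<L \<beta>}"
        then obtain \<beta>' where b': "\<beta>' \<in> H2" "x \<in> C (L \<beta>') j" "x < L \<beta>" unfolding D_def by blast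
        have "\<beta> \<in> H" "\<beta>' \<in> H" using b b'(1) unfolding H2_def by auto
        consider "\<beta>' = \<beta>" | "\<beta>' < \<beta>" | "\<beta> < \<beta>'" using less_linear by blast
        thus "x \<in> C (L \<beta>) j"
        proof cases
          case 1 thus ?thesis using b' by simp
        next
          case 2 thus ?thesis using coh[OF \<open>\<beta>' \<in> H\<close> \<open>\<beta> \<in> H\<close>] b' by blast
        next
          case 3 thus ?thesis using coh[OF \<open>\<beta> \<in> H\<close> \<open>\<beta>' \<in> H\<close>] b' by blast
        qed
      qed
    qed
    have unb2: "\<exists>\<beta>\<in>H2. \<delta> < \<beta>" for \<delta>
    proof -
      obtain x where x: "x \<in> H" using big_unbounded[OF Hiso] by blast
      obtain \<beta> where b: "\<beta> \<in> H" "max x \<delta> < \<beta>" using big_unbounded[OF Hiso] by blast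
      hence "\<beta> \<in> H2" using x unfolding H2_def by auto
      thus ?thesis using b by auto
    qed
    have clubD: "club D" unfolding club_def
    proof (intro conjI allI impI)
      fix \<delta>
      obtain \<beta> where b: "\<beta> \<in> H2" "\<delta> < \<beta>" using unb2 by blast
      hence "\<delta> < L \<beta>" using L_ge[of \<beta>] by simp
      then obtain \<gamma> where "\<gamma> \<in> C (L \<beta>) j" "\<delta> \<le> \<gamma>" using club2[OF b(1)] unfolding club_in_def by blast
      thus "\<exists>\<gamma>\<in>D. \<delta> \<le> \<gamma>" using b(1) unfolding D_def by blast
    next
      fix \<gamma> assume ap: "acc_pt D \<gamma>"
      obtain \<beta> where b: "\<beta> \<in> H2" "\<gamma> < \<beta>" using unb2 by blast
      hence gl: "\<gamma> < L \<beta>" using L_ge[of \<beta>] by simp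
      have "acc_pt (C (L \<beta>) j) \<gamma>" using acc_pt_transfer[OF ap gl] key[OF b(1)] by blast
      hence "\<gamma> \<in> C (L \<beta>) j" using club2[OF b(1)] gl unfolding club_in_def by blast
      thus "\<gamma> \<in> D" using b(1) unfolding D_def by blast
    qed
    obtain \<alpha> where aD: "\<alpha> \<in> acc D" and aE: "\<alpha> \<in> E_ge \<theta>"
      and ne: "\<forall>i. ix \<alpha> \<le> i \<and> i < \<theta> \<longrightarrow> D \<inter> {..<\<alpha>} \<noteq> C \<alpha> i"
      using W4[OF clubD] by blast
    obtain \<beta> where b: "\<beta> \<in> H2" "\<alpha> < \<beta>" using unb2 by blast
    hence al: "\<alpha> < L \<beta>" using L_ge[of \<beta>] by simp
    have "\<alpha> \<in> C (L \<beta>) j" using aD al key[OF b(1)] unfolding acc_def by blast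
    moreover have "acc_pt (C (L \<beta>) j) \<alpha>" using acc_pt_transfer[OF _ al] aD key[OF b(1)] unfolding acc_def by blast
    ultimately have "\<alpha> \<in> acc (C (L \<beta>) j)" unfolding acc_def by blast
    from W2[OF L_acc ix2[OF b(1)] j this aE]
    have "ix \<alpha> \<le> j" "C \<alpha> j = C (L \<beta>) j \<inter> {..<\<alpha>}" by auto
    moreover have "C (L \<beta>) j \<inter> {..<\<alpha>} = D \<inter> {..<\<alpha>}"
    proof -
      have ii: "{..<L \<beta>} \<inter> {..<\<alpha>} = {..<\<alpha>}" using al by auto
      have "D \<inter> {..<\<alpha>} = (D \<inter> {..<L \<beta>}) \<inter> {..<\<alpha>}" by (simp only: Int_assoc ii)
      thus ?thesis using key[OF b(1)] by simp
    qed
    ultimately have "D \<inter> {..<\<alpha>} = C \<alpha> j" "ix \<alpha> \<le> j" by simp_all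
    thus False using ne j by blast
  qed
qed

end


definition R :: "'k::wellorder \<Rightarrow> 'k \<Rightarrow> ('k \<Rightarrow> 'k) \<Rightarrow> ('k \<Rightarrow> 'k)" where
  "R d \<delta> g = (\<lambda>\<xi>. if \<xi> < \<delta> then g \<xi> else d)"

lemma RR: "\<delta> \<le> \<delta>' \<Longrightarrow> R d \<delta> (R d \<delta>' g) = R d \<delta> g"
  unfolding R_def by (rule ext) auto

lemma R_lt: "\<xi> < \<delta> \<Longrightarrow> R d \<delta> g \<xi> = g \<xi>" unfolding R_def by simp

context kapth begin

lemma U_contra:
  assumes wu: "witnesses_U c \<theta>" and unb: "\<forall>\<beta>. \<exists>x\<in>X. \<beta> \<le> x" and j: "j < \<theta>"
    and le: "\<forall>\<xi>\<in>X. \<forall>\<xi>'\<in>X. \<xi> < \<xi>' \<longrightarrow> c \<xi> \<xi>' \<le> j"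
  shows False
proof -
  obtain j' where j': "j < j'" "j' < \<theta>" using theta_succ[OF j] by blast
  have "(card_of X, U) \<in> ordIso" using unbounded_iso[OF unb] .
  then obtain a b where "a \<in> X" "b \<in> X" "a < b" "j' \<le> c a b"
    using wu j' unfolding witnesses_U_def by blast
  thus False using le j'(1) by (meson leD order.strict_trans2)
qed

abbreviation "Nd \<delta> c \<equiv> (\<lambda>\<beta>. R \<theta> \<delta> (\<lambda>\<xi>. c \<xi> \<beta>)) ` {\<beta>. \<delta> \<le> \<beta>}"

lemma strict_unb:
  assumes "\<forall>\<gamma>. \<exists>x\<in>X. \<gamma> \<le> x" shows "\<exists>x\<in>X. \<gamma> < (x::'k)"
proof -
  obtain \<gamma>' where "\<gamma> < \<gamma>'" using no_max by blast
  moreover obtain x where "x \<in> X" "\<gamma>' \<le> x" using assms by blast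
  ultimately show ?thesis using less_le_trans by blast
qed

lemma caseA:
  assumes ci: "coloring_into c \<theta>" and sa: "subadditive c" and wu: "witnesses_U c \<theta>"
    and small: "\<forall>\<delta>. (card_of (Nd \<delta> c), U) \<in> ordLess"
    and WC: "\<forall>f :: 'k \<Rightarrow> 'k \<Rightarrow> bool. \<exists>H. (card_of H, U) \<in> ordIso \<and> (\<exists>b. \<forall>\<alpha>\<in>H. \<forall>\<beta>\<in>H. \<alpha> < \<beta> \<longrightarrow> f \<alpha> \<beta> = b)"
  shows False
proof -
  define f where "f \<beta> \<beta>' = (\<exists>\<xi><\<beta>. (\<forall>\<eta><\<xi>. c \<eta> \<beta> = c \<eta> \<beta>') \<and> c \<xi> \<beta> < c \<xi> \<beta>')" for \<beta> \<beta>'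
  obtain H b where Hiso: "(card_of H, U) \<in> ordIso" and hom: "\<forall>\<alpha>\<in>H. \<forall>\<beta>\<in>H. \<alpha> < \<beta> \<longrightarrow> f \<alpha> \<beta> = b"
    using WC by blast
  define t where "t \<beta> = (\<lambda>\<xi>. c \<xi> \<beta>)" for \<beta>
  define Ext where "Ext \<delta> s = {\<beta>\<in>H. \<delta> \<le> \<beta> \<and> R \<theta> \<delta> (t \<beta>) = s}" for \<delta> s
  define ub where "ub X \<longleftrightarrow> (\<forall>\<gamma>. \<exists>x\<in>X. \<gamma> \<le> (x::'k))" for X
  have aux: False if u1: "ub (Ext \<delta> s)" and u2: "ub (Ext \<delta> s')" and x0: "\<xi>0 < \<delta>"
    and agree: "\<forall>\<eta><\<xi>0. s \<eta> = s' \<eta>" and lt: "s \<xi>0 < s' \<xi>0" for \<delta> s s' \<xi>0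
  proof -
    obtain \<beta>1 where b1: "\<beta>1 \<in> Ext \<delta> s" using u1 unfolding ub_def by blast
    obtain \<beta>2 where b2: "\<beta>2 \<in> Ext \<delta> s'" "\<beta>1 < \<beta>2" using strict_unb u2 unfolding ub_def by blast
    obtain \<beta>3 where b3: "\<beta>3 \<in> Ext \<delta> s" "\<beta>2 < \<beta>3" using strict_unb u1 unfolding ub_def by blast
    have v1: "\<eta> < \<delta> \<Longrightarrow> c \<eta> \<beta>1 = s \<eta>" for \<eta> using b1 unfolding Ext_def t_def by (auto simp: R_def)
    have v2: "\<eta> < \<delta> \<Longrightarrow> c \<eta> \<beta>2 = s' \<eta>" for \<eta> using b2 unfolding Ext_def t_def by (auto simp: R_def)
    have v3: "\<eta> < \<delta> \<Longrightarrow> c \<eta> \<beta>3 = s \<eta>" for \<eta> using b3 unfolding Ext_def t_def by (auto simp: R_def)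
    have d1: "\<delta> \<le> \<beta>1" "\<delta> \<le> \<beta>2" using b1 b2 unfolding Ext_def by auto
    have H123: "\<beta>1 \<in> H" "\<beta>2 \<in> H" "\<beta>3 \<in> H" using b1 b2 b3 unfolding Ext_def by auto
    have "f \<beta>1 \<beta>2" unfolding f_def
    proof (intro exI conjI allI impI)
      show "\<xi>0 < \<beta>1" using x0 d1 by simp
      fix \<eta> assume "\<eta> < \<xi>0"
      hence "\<eta> < \<delta>" using x0 by simp
      thus "c \<eta> \<beta>1 = c \<eta> \<beta>2" using v1 v2 agree \<open>\<eta> < \<xi>0\<close> by simp
    next
      show "c \<xi>0 \<beta>1 < c \<xi>0 \<beta>2" using v1 v2 x0 lt by simp
    qed
    moreover have "\<not> f \<beta>2 \<beta>3" unfolding f_def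
    proof
      assume "\<exists>\<xi><\<beta>2. (\<forall>\<eta><\<xi>. c \<eta> \<beta>2 = c \<eta> \<beta>3) \<and> c \<xi> \<beta>2 < c \<xi> \<beta>3"
      then obtain \<xi> where xi: "\<forall>\<eta><\<xi>. c \<eta> \<beta>2 = c \<eta> \<beta>3" "c \<xi> \<beta>2 < c \<xi> \<beta>3" by blast
      consider "\<xi> < \<xi>0" | "\<xi> = \<xi>0" | "\<xi>0 < \<xi>" using less_linear by blast
      thus False
      proof cases
        case 1 thus False using xi(2) v2 v3 agree x0 by (metis less_irrefl order.strict_trans)
      next
        case 2 thus False using xi(2) v2 v3 lt x0 by (metis less_asym)
      next
        case 3 thus False using xi(1) v2 v3 lt x0 by (metis less_irrefl)
      qed
    qed
    ultimately show False using hom H123 b2(2) b3(2) by metis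
  qed
  have Ext_shape: "s \<eta> = \<theta>" if "\<beta> \<in> Ext \<delta> s" "\<not> \<eta> < \<delta>" for \<beta> \<delta> s \<eta>
    using that unfolding Ext_def R_def by auto
  have uniq: "s = s'" if u1: "ub (Ext \<delta> s)" and u2: "ub (Ext \<delta> s')" for \<delta> s s'
  proof (rule ccontr)
    assume ne: "s \<noteq> s'"
    then obtain \<xi> where "s \<xi> \<noteq> s' \<xi>" by blast
    define \<xi>0 where "\<xi>0 = (LEAST \<xi>. s \<xi> \<noteq> s' \<xi>)"
    have d: "s \<xi>0 \<noteq> s' \<xi>0" unfolding \<xi>0_def by (rule LeastI) fact
    have agree: "\<forall>\<eta><\<xi>0. s \<eta> = s' \<eta>" unfolding \<xi>0_def using not_less_Least by blast
    obtain \<beta>1 where "\<beta>1 \<in> Ext \<delta> s" using u1 unfolding ub_def by blast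
    obtain \<beta>2 where "\<beta>2 \<in> Ext \<delta> s'" using u2 unfolding ub_def by blast
    have x0: "\<xi>0 < \<delta>" using Ext_shape[OF \<open>\<beta>1 \<in> Ext \<delta> s\<close>] Ext_shape[OF \<open>\<beta>2 \<in> Ext \<delta> s'\<close>] d by metis
    show False
    proof (cases "s \<xi>0 < s' \<xi>0")
      case True thus False using aux[OF u1 u2 x0 agree] by blast
    next
      case False
      hence "s' \<xi>0 < s \<xi>0" using d by simp
      thus False using aux[OF u2 u1 x0] agree by metis
    qed
  qed
  have exnode: "\<exists>s\<in>Nd \<delta> c. ub (Ext \<delta> s)" for \<delta>
  proof -
    have unbX: "\<forall>\<gamma>. \<exists>x\<in>{\<beta>\<in>H. \<delta> \<le> \<beta>}. \<gamma> \<le> x"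
    proof
      fix \<gamma> obtain x where "x \<in> H" "max \<gamma> \<delta> < x" using big_unbounded[OF Hiso] by blast
      thus "\<exists>x\<in>{\<beta>\<in>H. \<delta> \<le> \<beta>}. \<gamma> \<le> x" by auto
    qed
    have "\<forall>x\<in>{\<beta>\<in>H. \<delta> \<le> \<beta>}. R \<theta> \<delta> (t x) \<in> Nd \<delta> c" unfolding t_def by auto
    from pigeonhole[OF unbX this small[rule_format]] obtain s where
      "s \<in> Nd \<delta> c" "\<forall>\<gamma>. \<exists>x\<in>{\<beta>\<in>H. \<delta> \<le> \<beta>}. R \<theta> \<delta> (t x) = s \<and> \<gamma> \<le> x" by blast
    thus ?thesis unfolding ub_def Ext_def by blast
  qed
  define S where "S \<delta> = (SOME s. s \<in> Nd \<delta> c \<and> ub (Ext \<delta> s))" for \<delta>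
  have S: "S \<delta> \<in> Nd \<delta> c \<and> ub (Ext \<delta> (S \<delta>))" for \<delta>
    unfolding S_def using exnode[of \<delta>] by (metis (mono_tags, lifting) someI_ex)
  have coh: "S \<delta>' \<xi> = S \<delta> \<xi>" if "\<delta> \<le> \<delta>'" "\<xi> < \<delta>" for \<delta> \<delta>' \<xi>
  proof -
    have "Ext \<delta>' (S \<delta>') \<subseteq> Ext \<delta> (R \<theta> \<delta> (S \<delta>'))"
    proof
      fix x assume "x \<in> Ext \<delta>' (S \<delta>')"
      hence x: "x \<in> H" "\<delta>' \<le> x" "R \<theta> \<delta>' (t x) = S \<delta>'" unfolding Ext_def by auto
      have "R \<theta> \<delta> (t x) = R \<theta> \<delta> (R \<theta> \<delta>' (t x))" using RR[OF that(1)] by simp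
      also have "\<dots> = R \<theta> \<delta> (S \<delta>')" using x(3) by simp
      finally show "x \<in> Ext \<delta> (R \<theta> \<delta> (S \<delta>'))" unfolding Ext_def using x that(1) by auto
    qed
    hence "ub (Ext \<delta> (R \<theta> \<delta> (S \<delta>')))" using S[of \<delta>'] unfolding ub_def by blast
    hence "R \<theta> \<delta> (S \<delta>') = S \<delta>" using uniq S by blast
    thus ?thesis using R_lt[OF that(2)] by metis
  qed
  define \<sigma> where "\<sigma> \<xi> = (SOME \<gamma>. \<xi> < \<gamma>)" for \<xi> :: 'k
  have \<sigma>: "\<xi> < \<sigma> \<xi>" for \<xi> unfolding \<sigma>_def using no_max by (metis someI_ex)
  define F where "F \<xi> = S (\<sigma> \<xi>) \<xi>" for \<xi>
  have Sval: "\<exists>\<beta>. \<delta> \<le> \<beta> \<and> (\<forall>\<xi><\<delta>. S \<delta> \<xi> = c \<xi> \<beta>)" for \<delta>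
  proof -
    obtain \<beta> where "\<delta> \<le> \<beta>" "S \<delta> = R \<theta> \<delta> (\<lambda>\<xi>. c \<xi> \<beta>)" using S[of \<delta>] by blast
    thus ?thesis by (auto simp: R_def)
  qed
  have Fth: "\<forall>x\<in>UNIV. F x \<in> {..<\<theta>}"
  proof
    fix \<xi> obtain \<beta> where "\<sigma> \<xi> \<le> \<beta>" "\<forall>\<xi>'<\<sigma> \<xi>. S (\<sigma> \<xi>) \<xi>' = c \<xi>' \<beta>" using Sval by blast
    moreover have "\<xi> < \<beta>" using \<sigma>[of \<xi>] calculation(1) by simp
    ultimately show "F \<xi> \<in> {..<\<theta>}" unfolding F_def using \<sigma>[of \<xi>] ci unfolding coloring_into_def by auto
  qed
  have unbU: "\<forall>\<gamma>. \<exists>x\<in>(UNIV::'k set). \<gamma> \<le> x" by blast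
  from pigeonhole[OF unbU Fth seg_small] obtain j where j: "j < \<theta>"
    and Xj: "\<forall>\<gamma>. \<exists>x\<in>UNIV. F x = j \<and> \<gamma> \<le> x" by auto
  show False
  proof (rule U_contra[OF wu, of "{x. F x = j}" j])
    show "\<forall>\<gamma>. \<exists>x\<in>{x. F x = j}. \<gamma> \<le> x" using Xj by blast
    show "j < \<theta>" by (rule j)
    show "\<forall>\<xi>\<in>{x. F x = j}. \<forall>\<xi>'\<in>{x. F x = j}. \<xi> < \<xi>' \<longrightarrow> c \<xi> \<xi>' \<le> j"
    proof (intro ballI impI)
      fix \<xi> \<xi>' assume a: "\<xi> \<in> {x. F x = j}" "\<xi>' \<in> {x. F x = j}" "\<xi> < \<xi>'"
      define \<delta> where "\<delta> = max (\<sigma> \<xi>) (\<sigma> \<xi>')"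
      obtain \<beta> where b: "\<delta> \<le> \<beta>" "\<forall>\<zeta><\<delta>. S \<delta> \<zeta> = c \<zeta> \<beta>" using Sval by blast
      have l1: "\<sigma> \<xi> \<le> \<delta>" "\<sigma> \<xi>' \<le> \<delta>" unfolding \<delta>_def by auto
      have x1: "\<xi> < \<delta>" "\<xi>' < \<delta>" using \<sigma>[of \<xi>] \<sigma>[of \<xi>'] l1 by (meson less_le_trans)+
      have "c \<xi> \<beta> = j" using b(2) x1(1) coh[OF l1(1) \<sigma>[of \<xi>]] a(1) unfolding F_def by simp
      moreover have "c \<xi>' \<beta> = j" using b(2) x1(2) coh[OF l1(2) \<sigma>[of \<xi>']] a(2) unfolding F_def by simp
      moreover have "\<xi>' < \<beta>" using x1(2) b(1) by simp
      ultimately show "c \<xi> \<xi>' \<le> j" using sa a(3) unfolding subadditive_def by (metis max.idem)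
    qed
  qed
qed

lemma caseB:
  assumes ci: "coloring_into c \<theta>"
    and big: "\<not> (card_of (Nd \<alpha>0 c), U) \<in> ordLess"
    and minimal: "\<forall>\<delta><\<alpha>0. (card_of (Nd \<delta> c), U) \<in> ordLess"
    and WC: "\<forall>f :: 'k \<Rightarrow> 'k \<Rightarrow> bool. \<exists>H. (card_of H, U) \<in> ordIso \<and> (\<exists>b. \<forall>\<alpha>\<in>H. \<forall>\<beta>\<in>H. \<alpha> < \<beta> \<longrightarrow> f \<alpha> \<beta> = b)"
  shows False
proof -
  have "(U, card_of (Nd \<alpha>0 c)) \<in> ordLeq"
    using big not_ordLess_iff_ordLeq[OF card_of_Well_order card_of_Well_order] by blast
  then obtain u :: "'k \<Rightarrow> 'k \<Rightarrow> 'k" where inj: "inj_on u UNIV" and uN: "u ` UNIV \<subseteq> Nd \<alpha>0 c"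
    using card_of_ordLeq[of "UNIV::'k set" "Nd \<alpha>0 c"] by blast
  have uform: "\<exists>\<gamma>. \<alpha>0 \<le> \<gamma> \<and> u \<beta> = R \<theta> \<alpha>0 (\<lambda>\<xi>. c \<xi> \<gamma>)" for \<beta> using uN by blast
  have uout: "\<not> \<xi> < \<alpha>0 \<Longrightarrow> u \<beta> \<xi> = \<theta>" for \<beta> \<xi> using uform[of \<beta>] by (auto simp: R_def)
  define dd where "dd \<beta> \<beta>' = (LEAST \<xi>. u \<beta> \<xi> \<noteq> u \<beta>' \<xi>)" for \<beta> \<beta>'
  have ddp: "u \<beta> (dd \<beta> \<beta>') \<noteq> u \<beta>' (dd \<beta> \<beta>') \<and> dd \<beta> \<beta>' < \<alpha>0 \<and> (\<forall>\<eta><dd \<beta> \<beta>'. u \<beta> \<eta> = u \<beta>' \<eta>)"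
    if "\<beta> \<noteq> \<beta>'" for \<beta> \<beta>'
  proof -
    have "u \<beta> \<noteq> u \<beta>'" using inj that by (meson UNIV_I inj_on_def)
    then obtain \<xi> where "u \<beta> \<xi> \<noteq> u \<beta>' \<xi>" by blast
    hence d: "u \<beta> (dd \<beta> \<beta>') \<noteq> u \<beta>' (dd \<beta> \<beta>')" unfolding dd_def by (rule LeastI)
    moreover have "dd \<beta> \<beta>' < \<alpha>0" using d uout by metis
    moreover have "\<forall>\<eta><dd \<beta> \<beta>'. u \<beta> \<eta> = u \<beta>' \<eta>" unfolding dd_def using not_less_Least by blast
    ultimately show ?thesis by blast
  qed
  define f where "f \<beta> \<beta>' = (\<exists>\<xi><\<alpha>0. (\<forall>\<eta><\<xi>. u \<beta> \<eta> = u \<beta>' \<eta>) \<and> u \<beta> \<xi> < u \<beta>' \<xi>)" for \<beta> \<beta>'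
  have fchar: "f \<beta> \<beta>' = (u \<beta> \<xi> < u \<beta>' \<xi>)"
    if x: "\<xi> < \<alpha>0" and ag: "\<forall>\<eta><\<xi>. u \<beta> \<eta> = u \<beta>' \<eta>" and ne: "u \<beta> \<xi> \<noteq> u \<beta>' \<xi>" for \<beta> \<beta>' \<xi>
  proof
    assume "f \<beta> \<beta>'"
    then obtain \<xi>' where x': "\<forall>\<eta><\<xi>'. u \<beta> \<eta> = u \<beta>' \<eta>" "u \<beta> \<xi>' < u \<beta>' \<xi>'" unfolding f_def by blast
    have "\<xi>' = \<xi>"
    proof (rule ccontr)
      assume "\<xi>' \<noteq> \<xi>"
      hence "\<xi>' < \<xi> \<or> \<xi> < \<xi>'" by (rule neqE) auto
      thus False using x'(1) x'(2) ag ne by (metis less_irrefl)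
    qed
    thus "u \<beta> \<xi> < u \<beta>' \<xi>" using x' by simp
  next
    assume "u \<beta> \<xi> < u \<beta>' \<xi>"
    thus "f \<beta> \<beta>'" unfolding f_def using x ag by blast
  qed
  obtain H b where Hiso: "(card_of H, U) \<in> ordIso" and hom: "\<forall>\<alpha>\<in>H. \<forall>\<beta>\<in>H. \<alpha> < \<beta> \<longrightarrow> f \<alpha> \<beta> = b"
    using WC by blast
  define nxt where "nxt \<beta> = (LEAST \<gamma>. \<gamma> \<in> H \<and> \<beta> < \<gamma>)" for \<beta>
  have nxt: "nxt \<beta> \<in> H \<and> \<beta> < nxt \<beta>" for \<beta>
  proof -
    obtain x where "x \<in> H" "\<beta> < x" using big_unbounded[OF Hiso] by blast
    thus ?thesis unfolding nxt_def by (metis (mono_tags, lifting) LeastI)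
  qed
  have nxt_le: "\<gamma> \<in> H \<Longrightarrow> \<beta> < \<gamma> \<Longrightarrow> nxt \<beta> \<le> \<gamma>" for \<beta> \<gamma>
    unfolding nxt_def by (simp add: Least_le)
  define \<Phi> where "\<Phi> \<beta> = (dd \<beta> (nxt \<beta>), R \<theta> (dd \<beta> (nxt \<beta>)) (u (nxt \<beta>)), u (nxt \<beta>) (dd \<beta> (nxt \<beta>)))" for \<beta>
  have noteq: False if b: "\<beta> \<in> H" and g: "\<gamma> \<in> H" and bg: "\<beta> < \<gamma>" and eq: "\<Phi> \<beta> = \<Phi> \<gamma>" for \<beta> \<gamma>
  proof -
    define bp where "bp = nxt \<beta>"
    define gp where "gp = nxt \<gamma>"
    define \<delta> where "\<delta> = dd \<beta> bp"
    have "(dd \<beta> bp, R \<theta> (dd \<beta> bp) (u bp), u bp (dd \<beta> bp)) = (dd \<gamma> gp, R \<theta> (dd \<gamma> gp) (u gp), u gp (dd \<gamma> gp))"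
      using eq unfolding \<Phi>_def bp_def gp_def .
    note ee = this[unfolded prod.inject]
    have e1: "dd \<gamma> gp = \<delta>" using ee unfolding \<delta>_def by (elim conjE) (rule sym)
    have e2: "R \<theta> \<delta> (u bp) = R \<theta> \<delta> (u gp)" using ee e1 unfolding \<delta>_def by (elim conjE) (simp only:)
    have e3: "u bp \<delta> = u gp \<delta>" using ee e1 unfolding \<delta>_def by (elim conjE) (simp only:)
    have gne: "\<gamma> \<noteq> gp" using nxt[of \<gamma>] unfolding gp_def by (metis less_irrefl)
    have dg: "u \<gamma> \<delta> \<noteq> u gp \<delta>" "\<delta> < \<alpha>0" "\<forall>\<eta><\<delta>. u \<gamma> \<eta> = u gp \<eta>"
      using ddp[OF gne] e1 by auto
    have agbg: "\<forall>\<eta><\<delta>. u bp \<eta> = u gp \<eta>"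
    proof (intro allI impI)
      fix \<eta> assume "\<eta> < \<delta>"
      thus "u bp \<eta> = u gp \<eta>" using fun_cong[OF e2, of \<eta>] R_lt by metis
    qed
    have bpH: "bp \<in> H" using nxt unfolding bp_def by blast
    have gpH: "gp \<in> H" "\<gamma> < gp" using nxt unfolding gp_def by blast+
    have "bp \<le> \<gamma>" unfolding bp_def using nxt_le[OF g bg] .
    show False
    proof (cases "bp = \<gamma>")
      case True thus False using dg(1) e3 by simp
    next
      case False
      hence lt: "bp < \<gamma>" using \<open>bp \<le> \<gamma>\<close> by simp
      have f1: "f bp \<gamma> = b" using hom bpH g lt by blast
      have f2: "f \<gamma> gp = b" using hom g gpH by blast
      have c2: "f \<gamma> gp = (u \<gamma> \<delta> < u gp \<delta>)" using fchar[OF dg(2) dg(3) dg(1)] .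
      have ag1: "\<forall>\<eta><\<delta>. u bp \<eta> = u \<gamma> \<eta>" using agbg dg(3) by simp
      have ne1: "u bp \<delta> \<noteq> u \<gamma> \<delta>" using e3 dg(1) by simp
      have c1: "f bp \<gamma> = (u bp \<delta> < u \<gamma> \<delta>)" using fchar[OF dg(2) ag1 ne1] .
      show False using f1 f2 c1 c2 e3 dg(1) by (metis less_asym neqE)
    qed
  qed
  have injP: "inj_on \<Phi> H"
  proof (rule inj_onI)
    fix x y assume "x \<in> H" "y \<in> H" "\<Phi> x = \<Phi> y"
    thus "x = y" using noteq by (metis neqE)
  qed
  define \<Sigma> where "\<Sigma> = {..<\<alpha>0} \<times> ((\<Union>\<delta>\<in>{..<\<alpha>0}. Nd \<delta> c) \<times> {..<\<theta>})"
  have PS: "\<Phi> ` H \<subseteq> \<Sigma>"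
  proof
    fix z assume "z \<in> \<Phi> ` H"
    then obtain \<beta> where z: "z = \<Phi> \<beta>" by blast
    define bp where "bp = nxt \<beta>"
    define \<delta> where "\<delta> = dd \<beta> bp"
    have bne: "\<beta> \<noteq> bp" using nxt[of \<beta>] unfolding bp_def by (metis less_irrefl)
    have d: "\<delta> < \<alpha>0" using ddp[OF bne] unfolding \<delta>_def by blast
    obtain \<gamma> where gm: "\<alpha>0 \<le> \<gamma>" "u bp = R \<theta> \<alpha>0 (\<lambda>\<xi>. c \<xi> \<gamma>)" using uform by blast
    have "R \<theta> \<delta> (u bp) = R \<theta> \<delta> (\<lambda>\<xi>. c \<xi> \<gamma>)" using gm(2) RR[of \<delta> \<alpha>0 \<theta>] d by (simp add: less_imp_le)
    moreover have "\<delta> \<le> \<gamma>" using d gm(1) by simp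
    ultimately have m2: "R \<theta> \<delta> (u bp) \<in> Nd \<delta> c" by blast
    have "u bp \<delta> = c \<delta> \<gamma>" using gm(2) R_lt[OF d] by simp
    moreover have "\<delta> < \<gamma>" using d gm(1) by simp
    ultimately have m3: "u bp \<delta> < \<theta>" using ci unfolding coloring_into_def by simp
    show "z \<in> \<Sigma>" unfolding z \<Phi>_def \<Sigma>_def using d m2 m3 unfolding bp_def[symmetric] \<delta>_def[symmetric] by blast
  qed
  have "(card_of H, card_of \<Sigma>) \<in> ordLeq" using injP PS card_of_ordLeq by blast
  moreover have "(card_of \<Sigma>, U) \<in> ordLess"
  proof -
    have m: "\<forall>i\<in>{..<\<alpha>0}. (card_of (Nd i c), U) \<in> ordLess" using minimal by simp
    have u1: "(card_of (\<Union>\<delta>\<in>{..<\<alpha>0}. Nd \<delta> c), U) \<in> ordLess" by (rule small_UN[OF seg_small m])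
    have u2: "(card_of ((\<Union>\<delta>\<in>{..<\<alpha>0}. Nd \<delta> c) \<times> {..<\<theta>}), U) \<in> ordLess" by (rule small_Times[OF u1 seg_small])
    show ?thesis unfolding \<Sigma>_def by (rule small_Times[OF seg_small u2])
  qed
  ultimately have "(card_of H, U) \<in> ordLess" using ordLeq_ordLess_trans by blast
  thus False using Hiso not_ordLess_ordIso by blast
qed

lemma not_wc:
  assumes ci: "coloring_into c \<theta>" and sa: "subadditive c" and wu: "witnesses_U c \<theta>"
  shows "\<not> weakly_compact TYPE('k)"
proof
  assume "weakly_compact TYPE('k)"
  hence WC: "\<forall>f :: 'k \<Rightarrow> 'k \<Rightarrow> bool. \<exists>H. (card_of H, U) \<in> ordIso \<and> (\<exists>b. \<forall>\<alpha>\<in>H. \<forall>\<beta>\<in>H. \<alpha> < \<beta> \<longrightarrow> f \<alpha> \<beta> = b)"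
    unfolding weakly_compact_def by blast
  show False
  proof (cases "\<forall>\<delta>. (card_of (Nd \<delta> c), U) \<in> ordLess")
    case True show False by (rule caseA[OF ci sa wu True WC])
  next
    case False
    then obtain \<delta> where "\<not> (card_of (Nd \<delta> c), U) \<in> ordLess" by blast
    define \<alpha>0 where "\<alpha>0 = (LEAST \<delta>. \<not> (card_of (Nd \<delta> c), U) \<in> ordLess)"
    have big: "\<not> (card_of (Nd \<alpha>0 c), U) \<in> ordLess" unfolding \<alpha>0_def by (rule LeastI) fact
    have minimal: "\<forall>\<delta><\<alpha>0. (card_of (Nd \<delta> c), U) \<in> ordLess" unfolding \<alpha>0_def using not_less_Least by blast
    show False by (rule caseB[OF ci big minimal WC])
  qed
qed

end

theorem proposition3p8:
  fixes \<theta> :: "'k::wellorder"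
  assumes "kappa_infinite_regular_cardinal TYPE('k)"
    and "infinite_regular_cardinal_ord \<theta>"
    and "boxminus_minus TYPE('k) \<theta>"
  shows "(\<exists>c :: 'k \<Rightarrow> 'k \<Rightarrow> 'k. Sigma_closed (E_ge \<theta>) c \<theta> \<and> subadditive c \<and> witnesses_U c \<theta>)
         \<and> \<not> weakly_compact TYPE('k)"
proof -
  obtain C ix where w: "boxminus_minus_wit \<theta> C ix"
    using assms(3) unfolding boxminus_minus_def by blast
  interpret box \<theta> C ix
    by unfold_locales (rule assms(1), rule assms(2), rule w)
  have "Sigma_closed (E_ge \<theta>) col \<theta> \<and> subadditive col \<and> witnesses_U col \<theta>"
    using col_closed col_subadd col_U by blast
  moreover have "\<not> weakly_compact TYPE('k)"
    by (rule not_wc[OF col_into col_subadd col_U])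
  ultimately show ?thesis by blast
qed

end
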